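(* Let $\mathbf{A}$ be an $n\times n$ skew-symmetric matrix over a field $K$ and $\mathbf{v}\in K^n$. Then the set system $([n],\mathcal{B})$ with $\mathcal{B}=\{I\subseteq[n]:(\mathbf{A}+\mathbf{v}\mathbf{v}^T)[I]\text{ is nonsingular}\}$ is a strong $\Delta$-matroid.
   Context: A matrix is skew-symmetric if $\mathbf{A}_{ij}=-\mathbf{A}_{ji}$ and $\mathbf{A}_{ii}=0$. $\mathbf{M}[I]$ is the principal submatrix indexed by $I$; the empty matrix is nonsingular. A $\Delta$-matroid is a pair $(E,\mathcal{B})$ with $\mathcal{B}$ a nonempty family of subsets of the finite set $E$ such that for all $B,B'\in\mathcal{B}$ and $x\in B\triangle B'$ there is $y\in B\triangle B'$ with $B\triangle\{x,y\}\in\mathcal{B}$. It is strong if for all $B,B'\in\mathcal{B}$ and $x\in B\triangle B'$ there is $y\in B\triangle B'$ with both $B\triangle\{x,y\}\in\mathcal{B}$ and $B'\triangle\{x,y\}\in\mathcal{B}$. *)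

theory Defs
  imports "Jordan_Normal_Form.Determinant" "Jordan_Normal_Form.DL_Submatrix"
begin

definition skew_symmetric_mat :: "nat \<Rightarrow> 'a::ring_1 mat \<Rightarrow> bool" where
  "skew_symmetric_mat n A \<longleftrightarrow> A \<in> carrier_mat n n \<and>
     (\<forall>i<n. \<forall>j<n. A $$ (i,j) = - A $$ (j,i)) \<and> (\<forall>i<n. A $$ (i,i) = 0)"

definition principal_submatrix :: "'a mat \<Rightarrow> nat set \<Rightarrow> 'a mat" where
  "principal_submatrix M I = submatrix M I I"

text \<open>Nonsingular square matrix: nonzero determinant (the empty matrix has det 1).\<close>
definition nonsingular :: "'a::field mat \<Rightarrow> bool" where
  "nonsingular M \<longleftrightarrow> det M \<noteq> 0"

definition outer_self :: "'a::ring_1 vec \<Rightarrow> 'a mat" where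
  "outer_self v = mat (dim_vec v) (dim_vec v) (\<lambda>(i,j). v $ i * v $ j)"

definition symdiff :: "'e set \<Rightarrow> 'e set \<Rightarrow> 'e set" (infixl "\<triangle>" 70) where
  "A \<triangle> B = (A - B) \<union> (B - A)"

definition delta_matroid :: "'e set \<Rightarrow> 'e set set \<Rightarrow> bool" where
  "delta_matroid E \<B> \<longleftrightarrow> finite E \<and> \<B> \<noteq> {} \<and> (\<forall>B\<in>\<B>. B \<subseteq> E) \<and>
     (\<forall>B\<in>\<B>. \<forall>B'\<in>\<B>. \<forall>x\<in>B \<triangle> B'. \<exists>y\<in>B \<triangle> B'. B \<triangle> {x,y} \<in> \<B>)"

definition strong_delta_matroid :: "'e set \<Rightarrow> 'e set set \<Rightarrow> bool" where
  "strong_delta_matroid E \<B> \<longleftrightarrow> delta_matroid E \<B> \<and>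
     (\<forall>B\<in>\<B>. \<forall>B'\<in>\<B>. \<forall>x\<in>B \<triangle> B'. \<exists>y\<in>B \<triangle> B'.
        B \<triangle> {x,y} \<in> \<B> \<and> B' \<triangle> {x,y} \<in> \<B>)"

end

theory Submission
  imports Defs
begin

definition Kmat :: "nat \<Rightarrow> 'a::field mat \<Rightarrow> nat set \<Rightarrow> 'a mat" where
  "Kmat n M X = mat n n (\<lambda>(i,j). if j \<in> X then M $$ (i,j) else (if i = j then 1 else 0))"

lemma det_conj_perm:
  fixes K :: "'a::comm_ring_1 mat"
  assumes K: "K \<in> carrier_mat n n" and p: "p permutes {0..<n}"
  shows "det (mat n n (\<lambda>(i,j). K $$ (p i, p j))) = det K"
proof -
  define K1 where "K1 = mat n n (\<lambda>(i,j). K $$ (p i, j))"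
  have K1: "K1 \<in> carrier_mat n n" unfolding K1_def by simp
  have d1: "det K1 = signof p * det K" unfolding K1_def by (rule det_permute_rows[OF K p])
  have pn: "\<And>i. i < n \<Longrightarrow> p i < n" using p by (meson atLeastLessThan_iff permutes_in_image zero_le)
  have eq: "mat n n (\<lambda>(i,j). K $$ (p i, p j)) = transpose_mat (mat n n (\<lambda>(i,j). transpose_mat K1 $$ (p i, j)))"
    by (rule eq_matI, auto simp: K1_def pn)
  have "det (mat n n (\<lambda>(i,j). transpose_mat K1 $$ (p i, j))) = signof p * det (transpose_mat K1)"
    by (rule det_permute_rows[OF _ p], use K1 in simp)
  then have "det (mat n n (\<lambda>(i,j). K $$ (p i, p j))) = signof p * det K1"
    unfolding eq by (subst det_transpose[of _ n], simp, subst (asm) det_transpose[OF K1], simp)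
  also have "\<dots> = (signof p * signof p) * det K" unfolding d1 by simp
  also have "signof p * signof p = (1::'a)"
    by (metis of_int_1 of_int_mult sign_idempotent)
  finally show ?thesis by simp
qed

lemma pick_bij:
  assumes "finite X"
  shows "bij_betw (pick X) {0..<card X} X"
proof -
  have inj: "inj_on (pick X) {0..<card X}"
    by (rule inj_onI, metis atLeastLessThan_iff nat_neq_iff pick_mono_le)
  have sub: "pick X ` {0..<card X} \<subseteq> X" using pick_in_set_le by auto
  have "card (pick X ` {0..<card X}) = card X" using card_image[OF inj] by simp
  then have "pick X ` {0..<card X} = X" using card_subset_eq[OF assms sub] by simp
  then show ?thesis using inj unfolding bij_betw_def by simp
qed

lemma exists_sigma:
  assumes X: "X \<subseteq> {0..<n}"
  shows "\<exists>p. p permutes {0..<n} \<and> (\<forall>i<card X. p i = pick X i) \<and> (\<forall>i. card X \<le> i \<and> i < n \<longrightarrow> p i \<notin> X)"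
proof -
  let ?k = "card X"
  have fX: "finite X" using X finite_subset by blast
  have kn: "?k \<le> n" using card_mono[OF _ X] by simp
  have "card {?k..<n} = card ({0..<n} - X)" using kn X fX by (simp add: card_Diff_subset)
  then obtain g where g: "bij_betw g {?k..<n} ({0..<n} - X)"
    using finite_same_card_bij by blast
  define p where "p i = (if i < ?k then pick X i else if i < n then g i else i)" for i
  have b1: "bij_betw p {0..<?k} X"
    using pick_bij[OF fX] by (rule bij_betw_cong[THEN iffD1, rotated], simp add: p_def)
  have b2: "bij_betw p {?k..<n} ({0..<n} - X)"
    using g by (rule bij_betw_cong[THEN iffD1, rotated], simp add: p_def)
  have "bij_betw p ({0..<?k} \<union> {?k..<n}) (X \<union> ({0..<n} - X))"
    by (rule bij_betw_combine[OF b1 b2], auto)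
  moreover have "{0..<?k} \<union> {?k..<n} = {0..<n}" using kn by auto
  moreover have "X \<union> ({0..<n} - X) = {0..<n}" using X by auto
  ultimately have "bij_betw p {0..<n} {0..<n}" by simp
  then have "p permutes {0..<n}" by (rule bij_imp_permutes, use kn in \<open>simp add: p_def\<close>)
  moreover have "\<forall>i. ?k \<le> i \<and> i < n \<longrightarrow> p i \<notin> X"
    using b2 unfolding bij_betw_def by auto
  ultimately show ?thesis by (auto simp: p_def)
qed

lemma det_Kmat:
  assumes M: "M \<in> carrier_mat n n" and X: "X \<subseteq> {0..<n}"
  shows "det (submatrix M X X) = det (Kmat n M X)"
proof -
  let ?k = "card X"
  obtain p where p: "p permutes {0..<n}" and p1: "\<forall>i<?k. p i = pick X i"
    and p2: "\<forall>i. ?k \<le> i \<and> i < n \<longrightarrow> p i \<notin> X"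
    using exists_sigma[OF X] by blast
  have fX: "finite X" using X finite_subset by blast
  have kn: "?k \<le> n" using card_mono[OF _ X] by simp
  have cardeq: "card {i. i < n \<and> i \<in> X} = ?k"
  proof -
    have "{i. i < n \<and> i \<in> X} = X" using X by auto
    then show ?thesis by simp
  qed
  have subc: "submatrix M X X \<in> carrier_mat ?k ?k"
    unfolding submatrix_def using M cardeq by simp
  have pn: "\<And>i. i < n \<Longrightarrow> p i < n" using p by (meson atLeastLessThan_iff permutes_in_image zero_le)
  have pX: "\<And>i. i < ?k \<Longrightarrow> p i \<in> X" using p1 pick_in_set_le by simp
  have pinj: "\<And>i j. p i = p j \<Longrightarrow> i = j" using p by (metis permutes_inj injD)
  define R where "R = mat (n - ?k) ?k (\<lambda>(i,j). Kmat n M X $$ (p (?k + i), p j))"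
  have "mat n n (\<lambda>(i,j). Kmat n M X $$ (p i, p j)) = four_block_mat (submatrix M X X) (0\<^sub>m ?k (n - ?k)) R (1\<^sub>m (n - ?k))"
  proof (rule eq_matI)
    fix i j assume i: "i < dim_row (four_block_mat (submatrix M X X) (0\<^sub>m ?k (n - ?k)) R (1\<^sub>m (n - ?k)))"
      and j: "j < dim_col (four_block_mat (submatrix M X X) (0\<^sub>m ?k (n - ?k)) R (1\<^sub>m (n - ?k)))"
    have i': "i < n" "j < n" using i j subc kn by auto
    show "mat n n (\<lambda>(i,j). Kmat n M X $$ (p i, p j)) $$ (i,j) = four_block_mat (submatrix M X X) (0\<^sub>m ?k (n - ?k)) R (1\<^sub>m (n - ?k)) $$ (i,j)"
    proof (cases "i < ?k")
      case True
      show ?thesis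
      proof (cases "j < ?k")
        case True
        have "pick X i \<in> X" "pick X j \<in> X" using pick_in_set_le \<open>i < ?k\<close> True by auto
        then have pi: "pick X i < n" "pick X j < n" using X by auto
        have "submatrix M X X $$ (i,j) = M $$ (pick X i, pick X j)"
          by (rule submatrix_index, use M cardeq \<open>i < ?k\<close> True in auto)
        then show ?thesis using \<open>i < ?k\<close> True i' subc pn p1 pX pi
          by (simp add: Kmat_def)
      next
        case False
        then have "p j \<notin> X" using p2 i' by auto
        moreover have "p i \<noteq> p j" using pX[OF \<open>i<?k\<close>] calculation by auto
        ultimately show ?thesis using \<open>i < ?k\<close> False i' subc pn by (simp add: Kmat_def)
      qed
    next
      case False
      show ?thesis
      proof (cases "j < ?k")
        case True
        then show ?thesis using False i' subc pn by (simp add: Kmat_def R_def)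
      next
        case F2: False
        then have "p j \<notin> X" using p2 i' by auto
        have "(i - ?k = j - ?k) = (i = j)" using False F2 by auto
        then show ?thesis using False F2 i' subc pn pinj \<open>p j \<notin> X\<close> by (auto simp add: Kmat_def)
      qed
    qed
  qed (use subc kn in auto)
  then have "det (Kmat n M X) = det (four_block_mat (submatrix M X X) (0\<^sub>m ?k (n - ?k)) R (1\<^sub>m (n - ?k)))"
    using det_conj_perm[OF _ p, of "Kmat n M X"] by (simp add: Kmat_def)
  also have "\<dots> = det (submatrix M X X) * det (1\<^sub>m (n - ?k) :: 'a mat)"
    by (rule det_four_block_mat_upper_right_zero[OF subc refl], auto simp: R_def)
  finally show ?thesis by simp
qed

definition Lmat :: "nat \<Rightarrow> 'a::field mat \<Rightarrow> nat set \<Rightarrow> 'a mat" where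
  "Lmat n M X = mat n n (\<lambda>(i,j). if j \<in> X then (if i = j then 1 else 0) else M $$ (i,j))"

definition Gi :: "'a::field mat \<Rightarrow> 'a mat" where
  "Gi K = (1 / det K) \<cdot>\<^sub>m adj_mat K"

lemma Kmat_carrier[simp]: "Kmat n M X \<in> carrier_mat n n" unfolding Kmat_def by simp
lemma Kmat_dim[simp]: "dim_row (Kmat n M X) = n" "dim_col (Kmat n M X) = n" unfolding Kmat_def by simp_all
lemma Lmat_dim[simp]: "dim_row (Lmat n M X) = n" "dim_col (Lmat n M X) = n" unfolding Lmat_def by simp_all
lemma Kmat_index: "i < n \<Longrightarrow> j < n \<Longrightarrow> Kmat n M X $$ (i,j) = (if j \<in> X then M $$ (i,j) else (if i = j then 1 else 0))"
  unfolding Kmat_def by simp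
lemma Lmat_index: "i < n \<Longrightarrow> j < n \<Longrightarrow> Lmat n M X $$ (i,j) = (if j \<in> X then (if i = j then 1 else 0) else M $$ (i,j))"
  unfolding Lmat_def by simp
lemma Lmat_carrier[simp]: "Lmat n M X \<in> carrier_mat n n" unfolding Lmat_def by simp

lemma Gi:
  assumes K: "K \<in> carrier_mat n n" and d: "det K \<noteq> 0"
  shows "Gi K \<in> carrier_mat n n" "K * Gi K = 1\<^sub>m n" "Gi K * K = 1\<^sub>m n"
proof -
  show c: "Gi K \<in> carrier_mat n n" unfolding Gi_def using adj_mat(1)[OF K] by simp
  have "K * Gi K = (1 / det K) \<cdot>\<^sub>m (K * adj_mat K)" unfolding Gi_def
    using adj_mat(1)[OF K] K by (simp add: mult_smult_distrib)
  also have "\<dots> = 1\<^sub>m n" unfolding adj_mat(2)[OF K] using d by (intro eq_matI, auto)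
  finally show "K * Gi K = 1\<^sub>m n" .
  then show "Gi K * K = 1\<^sub>m n" using mat_mult_left_right_inverse[OF K c] by simp
qed

lemma col_Kmat: "j < n \<Longrightarrow> N \<in> carrier_mat n n \<Longrightarrow> col (Kmat n N X) j = (if j \<in> X then col N j else unit_vec n j)"
  by (rule eq_vecI, auto simp: Kmat_def)

lemma twist:
  assumes M: "M \<in> carrier_mat n n" and d: "det (Kmat n M B) \<noteq> 0"
    and N: "N = Gi (Kmat n M B) * Lmat n M B"
  shows "Kmat n M (X \<triangle> B) = Kmat n M B * Kmat n N X"
proof -
  let ?K = "Kmat n M B"
  have G: "Gi ?K \<in> carrier_mat n n" "?K * Gi ?K = 1\<^sub>m n" using Gi[OF Kmat_carrier d] by auto
  have Nc: "N \<in> carrier_mat n n" using N G by simp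
  have KN: "?K * N = Lmat n M B" unfolding N
    by (subst assoc_mult_mat[symmetric, of _ n n _ n _ n], use G in \<open>auto simp: left_mult_one_mat[OF Lmat_carrier]\<close>)
  show ?thesis
  proof (rule eq_matI)
    fix i j assume i: "i < dim_row (?K * Kmat n N X)" and j: "j < dim_col (?K * Kmat n N X)"
    then have i': "i < n" "j < n" by (auto simp: Kmat_def)
    have "(?K * Kmat n N X) $$ (i,j) = row ?K i \<bullet> col (Kmat n N X) j" using i' by simp
    also have "\<dots> = (if j \<in> X then (?K * N) $$ (i,j) else ?K $$ (i,j))"
      using i' Nc by (simp add: col_Kmat)
    also have "\<dots> = Kmat n M (X \<triangle> B) $$ (i,j)"
      unfolding KN using i' by (auto simp: Kmat_def Lmat_def symdiff_def)
    finally show "Kmat n M (X \<triangle> B) $$ (i,j) = (?K * Kmat n N X) $$ (i,j)" by simp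
  qed (auto simp: Kmat_def)
qed

lemma twist_det:
  assumes M: "M \<in> carrier_mat n n" and d: "det (Kmat n M B) \<noteq> 0"
    and N: "N = Gi (Kmat n M B) * Lmat n M B"
  shows "det (Kmat n M (X \<triangle> B)) = det (Kmat n M B) * det (Kmat n N X)"
  unfolding twist[OF assms] by (rule det_mult[of _ n], auto simp: N Kmat_def)

definition outer :: "nat \<Rightarrow> 'a::field vec \<Rightarrow> 'a mat" where
  "outer n w = mat n n (\<lambda>(i,j). w $ i * w $ j)"

lemma outer_carrier[simp]: "outer n w \<in> carrier_mat n n" unfolding outer_def by simp
lemma outer_index[simp]: "i < n \<Longrightarrow> j < n \<Longrightarrow> outer n w $$ (i,j) = w $ i * w $ j" unfolding outer_def by simp

lemma bilin:
  fixes T :: "'a::comm_ring_1 mat"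
  assumes T: "T \<in> carrier_mat n n" and u: "u \<in> carrier_vec n" and u': "u' \<in> carrier_vec n"
  shows "u \<bullet> (T *\<^sub>v u') = (\<Sum>i<n. \<Sum>j<n. u $ i * T $$ (i,j) * u' $ j)"
proof -
  have "u \<bullet> (T *\<^sub>v u') = (\<Sum>i<n. u $ i * (\<Sum>j<n. T $$ (i,j) * u' $ j))"
    using T u u' by (simp add: scalar_prod_def mult_mat_vec_def lessThan_atLeast0)
  also have "\<dots> = (\<Sum>i<n. \<Sum>j<n. u $ i * T $$ (i,j) * u' $ j)"
    by (simp add: sum_distrib_left mult.assoc)
  finally show ?thesis .
qed

lemma double_sum_alt:
  fixes f :: "nat \<Rightarrow> nat \<Rightarrow> 'a::comm_ring_1"
  assumes "\<And>i j. i < m \<Longrightarrow> j < m \<Longrightarrow> f i j = - f j i" "\<And>i. i < m \<Longrightarrow> f i i = 0"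
  shows "(\<Sum>i<m. \<Sum>j<m. f i j) = 0"
  using assms
proof (induction m)
  case 0 then show ?case by simp
next
  case (Suc m)
  have p1: "\<And>i j. i < m \<Longrightarrow> j < m \<Longrightarrow> f i j = - f j i" using Suc.prems(1) less_SucI by blast
  have p2: "\<And>i. i < m \<Longrightarrow> f i i = 0" using Suc.prems(2) less_SucI by blast
  have IH: "(\<Sum>i<m. \<Sum>j<m. f i j) = 0" by (rule Suc.IH[OF p1 p2])
  have "(\<Sum>i<Suc m. \<Sum>j<Suc m. f i j) = (\<Sum>i<m. (\<Sum>j<m. f i j) + f i m) + ((\<Sum>j<m. f m j) + f m m)"
    by simp
  also have "\<dots> = (\<Sum>i<m. \<Sum>j<m. f i j) + (\<Sum>i<m. f i m + f m i) + f m m"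
    by (simp add: sum.distrib)
  also have "(\<Sum>i<m. f i m + f m i) = 0"
  proof (rule sum.neutral, intro ballI)
    fix i assume "i \<in> {..<m}"
    then have "f i m = - f m i" using Suc.prems(1)[of i m] by simp
    then show "f i m + f m i = 0" by simp
  qed
  finally show ?case using IH Suc.prems(2)[of m] by simp
qed

lemma alt_quad:
  fixes T :: "'a::field mat"
  assumes T: "skew_symmetric_mat n T" and u: "u \<in> carrier_vec n"
  shows "u \<bullet> (T *\<^sub>v u) = 0"
proof -
  have Tc: "T \<in> carrier_mat n n" using T unfolding skew_symmetric_mat_def by simp
  have sk: "\<And>i j. i < n \<Longrightarrow> j < n \<Longrightarrow> T $$ (i,j) = - T $$ (j,i)" and dg: "\<And>i. i < n \<Longrightarrow> T $$ (i,i) = 0"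
    using T unfolding skew_symmetric_mat_def by blast+
  show ?thesis unfolding bilin[OF Tc u u]
  proof (rule double_sum_alt)
    fix i j assume "i < n" "j < n"
    then show "u $ i * T $$ (i, j) * u $ j = - (u $ j * T $$ (j, i) * u $ i)" using sk[of i j] by simp
  next
    fix i assume "i < n" then show "u $ i * T $$ (i, i) * u $ i = 0" using dg by simp
  qed
qed

lemma alt_bil:
  fixes T :: "'a::field mat"
  assumes T: "skew_symmetric_mat n T" and u: "u \<in> carrier_vec n" and u': "u' \<in> carrier_vec n"
  shows "u \<bullet> (T *\<^sub>v u') = - (u' \<bullet> (T *\<^sub>v u))"
proof -
  have Tc: "T \<in> carrier_mat n n" using T unfolding skew_symmetric_mat_def by simp
  have "(\<Sum>i<n. \<Sum>j<n. u' $ i * T $$ (i,j) * u $ j) = (\<Sum>j<n. \<Sum>i<n. u' $ i * T $$ (i,j) * u $ j)"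
    by (rule sum.swap)
  also have "\<dots> = (\<Sum>j<n. \<Sum>i<n. - (u $ j * T $$ (j,i) * u' $ i))"
  proof (rule sum.cong[OF refl], rule sum.cong[OF refl])
    fix j i assume "j \<in> {..<n}" "i \<in> {..<n}"
    then have "T $$ (i,j) = - T $$ (j,i)" using T unfolding skew_symmetric_mat_def by blast
    then show "u' $ i * T $$ (i,j) * u $ j = - (u $ j * T $$ (j,i) * u' $ i)" by simp
  qed
  finally show ?thesis unfolding bilin[OF Tc u u'] bilin[OF Tc u' u] by (simp add: sum_negf)
qed

lemma triple_index:
  fixes G T :: "'a::field mat"
  assumes G: "G \<in> carrier_mat n n" and T: "T \<in> carrier_mat n n" and i: "i < n" and j: "j < n"
  shows "(G * T * transpose_mat G) $$ (i,j) = row G i \<bullet> (T *\<^sub>v row G j)"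
proof -
  have "G * T * transpose_mat G = G * (T * transpose_mat G)"
    by (rule assoc_mult_mat[OF G T], use G in simp)
  moreover have "(G * (T * transpose_mat G)) $$ (i,j) = row G i \<bullet> col (T * transpose_mat G) j"
    using G T i j by simp
  moreover have "col (T * transpose_mat G) j = T *\<^sub>v row G j"
    using G T j by (simp add: mult_mat_vec_def)
  ultimately show ?thesis by simp
qed

lemma cong_alt:
  fixes G T :: "'a::field mat"
  assumes T: "skew_symmetric_mat n T" and G: "G \<in> carrier_mat n n"
  shows "skew_symmetric_mat n (G * T * transpose_mat G)"
proof -
  have Tc: "T \<in> carrier_mat n n" using T unfolding skew_symmetric_mat_def by simp
  have r: "\<And>i. i < n \<Longrightarrow> row G i \<in> carrier_vec n" using G by simp
  have c: "G * T * transpose_mat G \<in> carrier_mat n n" using G Tc by simp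
  have a: "\<forall>i<n. \<forall>j<n. (G * T * transpose_mat G) $$ (i,j) = - (G * T * transpose_mat G) $$ (j,i)"
  proof (intro allI impI)
    fix i j assume ij: "i < n" "j < n"
    show "(G * T * transpose_mat G) $$ (i,j) = - (G * T * transpose_mat G) $$ (j,i)"
      unfolding triple_index[OF G Tc ij] triple_index[OF G Tc ij(2) ij(1)]
      by (rule alt_bil[OF T r[OF ij(1)] r[OF ij(2)]])
  qed
  have b: "\<forall>i<n. (G * T * transpose_mat G) $$ (i,i) = 0"
    using triple_index[OF G Tc] alt_quad[OF T r] by presburger
  show ?thesis unfolding skew_symmetric_mat_def using a b c by blast
qed

lemma outer_cong:
  fixes G :: "'a::field mat"
  assumes G: "G \<in> carrier_mat n n" and w: "w \<in> carrier_vec n"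
  shows "G * outer n w * transpose_mat G = outer n (G *\<^sub>v w)"
proof (rule eq_matI)
  fix i j assume "i < dim_row (outer n (G *\<^sub>v w))" "j < dim_col (outer n (G *\<^sub>v w))"
  then have ij: "i < n" "j < n" by (auto simp: outer_def)
  have r: "\<And>i. i < n \<Longrightarrow> row G i \<in> carrier_vec n" using G by simp
  have "(G * outer n w * transpose_mat G) $$ (i,j) = (\<Sum>a<n. \<Sum>b<n. G $$ (i,a) * (w $ a * w $ b) * G $$ (j,b))"
    unfolding triple_index[OF G outer_carrier ij] bilin[OF outer_carrier r[OF ij(1)] r[OF ij(2)]]
    using G ij by (intro sum.cong refl, auto)
  also have "\<dots> = (\<Sum>a<n. G $$ (i,a) * w $ a) * (\<Sum>b<n. G $$ (j,b) * w $ b)"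
    by (simp add: sum_product algebra_simps)
  also have "\<dots> = (G *\<^sub>v w) $ i * (G *\<^sub>v w) $ j"
    using G w ij by (simp add: mult_mat_vec_def scalar_prod_def lessThan_atLeast0)
  finally show "(G * outer n w * transpose_mat G) $$ (i,j) = outer n (G *\<^sub>v w) $$ (i,j)"
    using ij by simp
qed (use G in \<open>auto simp: outer_def\<close>)

lemma LKT_index:
  fixes M :: "'a::field mat"
  assumes i: "i < n" and j: "j < n"
  shows "(Lmat n M Y * transpose_mat (Kmat n M Y)) $$ (i,j)
     = (if i \<in> Y then M $$ (j,i) else 0) + (if j \<notin> Y then M $$ (i,j) else 0)"
proof -
  have "(Lmat n M Y * transpose_mat (Kmat n M Y)) $$ (i,j) = (\<Sum>k<n. Lmat n M Y $$ (i,k) * Kmat n M Y $$ (j,k))"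
    using i j by (simp add: scalar_prod_def lessThan_atLeast0)
  also have "\<dots> = (\<Sum>k<n. (if k = i \<and> k \<in> Y then M $$ (j,i) else 0) + (if k = j \<and> k \<notin> Y then M $$ (i,j) else 0))"
    by (rule sum.cong[OF refl], use i j in \<open>auto simp: Kmat_index Lmat_index\<close>)
  also have "\<dots> = (if i \<in> Y then M $$ (j,i) else 0) + (if j \<notin> Y then M $$ (i,j) else 0)"
  proof -
    have a: "(\<Sum>k<n. if k = i \<and> k \<in> Y then M $$ (j,i) else 0) = (if i \<in> Y then M $$ (j,i) else 0)"
    proof (cases "i \<in> Y")
      case True
      then have "(\<Sum>k<n. if k = i \<and> k \<in> Y then M $$ (j,i) else 0) = (\<Sum>k<n. if k = i then M $$ (j,i) else 0)"
        by (intro sum.cong, auto)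
      then show ?thesis using True i by simp
    next
      case False
      have "(\<Sum>k<n. if k = i \<and> k \<in> Y then M $$ (j,i) else 0) = 0" by (intro sum.neutral, use False in auto)
      then show ?thesis using False by simp
    qed
    have b: "(\<Sum>k<n. if k = j \<and> k \<notin> Y then M $$ (i,j) else 0) = (if j \<notin> Y then M $$ (i,j) else 0)"
    proof (cases "j \<notin> Y")
      case True
      then have "(\<Sum>k<n. if k = j \<and> k \<notin> Y then M $$ (i,j) else 0) = (\<Sum>k<n. if k = j then M $$ (i,j) else 0)"
        by (intro sum.cong, auto)
      then show ?thesis using True j by simp
    next
      case False
      have "(\<Sum>k<n. if k = j \<and> k \<notin> Y then M $$ (i,j) else 0) = 0" by (intro sum.neutral, use False in auto)
      then show ?thesis using False by simp
    qed
    show ?thesis unfolding sum.distrib a b ..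
  qed
  finally show ?thesis .
qed

lemma classC:
  fixes S M :: "'a::field mat"
  assumes S: "skew_symmetric_mat n S" and w: "w \<in> carrier_vec n"
    and Md: "M = S + outer n w" and d: "det (Kmat n M Y) \<noteq> 0"
    and Nd: "N = Gi (Kmat n M Y) * Lmat n M Y"
  shows "skew_symmetric_mat n (N - outer n (Gi (Kmat n M Y) *\<^sub>v w))"
proof -
  let ?K = "Kmat n M Y" let ?L = "Lmat n M Y" let ?G = "Gi ?K"
  have G: "?G \<in> carrier_mat n n" "?K * ?G = 1\<^sub>m n" "?G * ?K = 1\<^sub>m n" using Gi[OF Kmat_carrier d] by auto
  have Sc: "S \<in> carrier_mat n n" using S unfolding skew_symmetric_mat_def by blast
  have Ssk: "\<And>i j. i < n \<Longrightarrow> j < n \<Longrightarrow> S $$ (i,j) = - S $$ (j,i)" and Sd: "\<And>i. i < n \<Longrightarrow> S $$ (i,i) = 0"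
    using S unfolding skew_symmetric_mat_def by blast+
  have Mi: "\<And>i j. i < n \<Longrightarrow> j < n \<Longrightarrow> M $$ (i,j) = S $$ (i,j) + w $ i * w $ j"
    unfolding Md using Sc by (simp add: outer_def)
  define T where "T = ?L * transpose_mat ?K - outer n w"
  have Tc: "T \<in> carrier_mat n n" unfolding T_def by (intro minus_carrier_mat mult_carrier_mat, auto)
  have Ti: "\<And>i j. i < n \<Longrightarrow> j < n \<Longrightarrow> T $$ (i,j) = (if i \<in> Y then M $$ (j,i) else 0) + (if j \<notin> Y then M $$ (i,j) else 0) - w $ i * w $ j"
  proof -
    fix i j assume ij: "i < n" "j < n"
    have "T $$ (i,j) = (?L * transpose_mat ?K) $$ (i,j) - outer n w $$ (i,j)"
      unfolding T_def using ij by (simp add: outer_def)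
    then show "?thesis i j" unfolding LKT_index[OF ij] using ij by simp
  qed
  have Tsk: "skew_symmetric_mat n T" unfolding skew_symmetric_mat_def
  proof (intro conjI allI impI Tc)
    fix i j assume ij: "i < n" "j < n"
    show "T $$ (i,j) = - T $$ (j,i)"
      unfolding Ti[OF ij] Ti[OF ij(2) ij(1)] Mi[OF ij] Mi[OF ij(2) ij(1)] using Ssk[OF ij]
      by (cases "i \<in> Y"; cases "j \<in> Y"; simp add: algebra_simps)
  next
    fix i assume i: "i < n"
    show "T $$ (i,i) = 0" unfolding Ti[OF i i] Mi[OF i i] using Sd[OF i] by simp
  qed
  have "?G * T * transpose_mat ?G = N - outer n (?G *\<^sub>v w)"
  proof -
    have e1: "?G * T = ?G * (?L * transpose_mat ?K) - ?G * outer n w"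
      unfolding T_def by (rule mult_minus_distrib_mat[of _ n n], use G in auto)
    have e2: "(?G * (?L * transpose_mat ?K) - ?G * outer n w) * transpose_mat ?G = (?G * (?L * transpose_mat ?K)) * transpose_mat ?G - ?G * outer n w * transpose_mat ?G"
      by (rule minus_mult_distrib_mat[of _ n n], use G in auto)
    have "?G * T * transpose_mat ?G = (?G * (?L * transpose_mat ?K)) * transpose_mat ?G - ?G * outer n w * transpose_mat ?G"
      unfolding e1 e2 ..
    also have "(?G * (?L * transpose_mat ?K)) * transpose_mat ?G = N * (transpose_mat ?K * transpose_mat ?G)"
    proof -
      have "?G * (?L * transpose_mat ?K) = (?G * ?L) * transpose_mat ?K"
        by (rule assoc_mult_mat[symmetric, of _ n n _ n _ n], use G in auto)
      moreover have "((?G * ?L) * transpose_mat ?K) * transpose_mat ?G = (?G * ?L) * (transpose_mat ?K * transpose_mat ?G)"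
        by (rule assoc_mult_mat[of _ n n _ n _ n], use G in auto)
      ultimately show ?thesis unfolding Nd by simp
    qed
    also have "transpose_mat ?K * transpose_mat ?G = 1\<^sub>m n"
      using transpose_mult[of ?G n n ?K n] G by simp
    also have "N * 1\<^sub>m n = N" unfolding Nd using G by simp
    finally show ?thesis using outer_cong[OF G(1) w] by simp
  qed
  then show ?thesis using cong_alt[OF Tsk G(1)] by simp
qed

lemma det2:
  fixes A :: "'a::comm_ring_1 mat"
  assumes A: "A \<in> carrier_mat 2 2"
  shows "det A = A $$ (0,0) * A $$ (1,1) - A $$ (0,1) * A $$ (1,0)"
proof -
  have "det A = (\<Sum>j<2. A $$ (0,j) * cofactor A 0 j)" by (rule laplace_expansion_row[OF A], simp)
  also have "\<dots> = A $$ (0,0) * cofactor A 0 0 + A $$ (0,1) * cofactor A 0 1"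
    by (simp add: numeral_2_eq_2)
  also have "cofactor A 0 0 = A $$ (1,1)"
    unfolding cofactor_def using A
    by (subst det_single, auto simp: mat_delete_def)
  also have "cofactor A 0 1 = - A $$ (1,0)"
    unfolding cofactor_def using A
    by (subst det_single, auto simp: mat_delete_def)
  finally show ?thesis by simp
qed

lemma pick_single: "pick {x} 0 = x" by (simp, rule Least_equality, auto)

lemma pick_pair: assumes "x < y" shows "pick {x,y} 0 = x" "pick {x,y} 1 = y"
proof -
  show p0: "pick {x,y} 0 = x" using assms by (simp, intro Least_equality, auto)
  show "pick {x,y} 1 = y" using assms p0 by (simp, intro Least_equality, auto)
qed

lemma det_K1:
  fixes N :: "'a::field mat"
  assumes N: "N \<in> carrier_mat n n" and x: "x < n"
  shows "det (Kmat n N {x}) = N $$ (x,x)"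
proof -
  have "{i. i < n \<and> i \<in> {x}} = {x}" using x by auto
  then have c: "card {i. i < n \<and> i \<in> {x}} = 1" by simp
  have sc: "submatrix N {x} {x} \<in> carrier_mat 1 1" unfolding submatrix_def using N c by simp
  have "det (Kmat n N {x}) = det (submatrix N {x} {x})" using det_Kmat[OF N] x by simp
  also have "\<dots> = submatrix N {x} {x} $$ (0,0)" by (rule det_single[OF sc])
  also have "\<dots> = N $$ (x,x)" using submatrix_index[of 0 N "{x}" 0 "{x}"] N c pick_single by simp
  finally show ?thesis .
qed

lemma det_K2:
  fixes N :: "'a::field mat"
  assumes N: "N \<in> carrier_mat n n" and xy: "x < y" and y: "y < n"
  shows "det (Kmat n N {x,y}) = N $$ (x,x) * N $$ (y,y) - N $$ (x,y) * N $$ (y,x)"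
proof -
  have "{i. i < n \<and> i \<in> {x,y}} = {x,y}" using xy y by auto
  then have c: "card {i. i < n \<and> i \<in> {x,y}} = 2" using xy by simp
  have sc: "submatrix N {x,y} {x,y} \<in> carrier_mat 2 2" unfolding submatrix_def using N c by simp
  have "det (Kmat n N {x,y}) = det (submatrix N {x,y} {x,y})" using det_Kmat[OF N] xy y by simp
  also have "\<dots> = submatrix N {x,y} {x,y} $$ (0,0) * submatrix N {x,y} {x,y} $$ (1,1)
     - submatrix N {x,y} {x,y} $$ (0,1) * submatrix N {x,y} {x,y} $$ (1,0)" by (rule det2[OF sc])
  also have "\<dots> = N $$ (x,x) * N $$ (y,y) - N $$ (x,y) * N $$ (y,x)"
    using submatrix_index[of _ N "{x,y}" _ "{x,y}"] N c pick_pair[OF xy] by simp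
  finally show ?thesis .
qed

lemma pair_det:
  fixes S :: "'a::field mat"
  assumes S: "skew_symmetric_mat n S" and w: "w \<in> carrier_vec n" and x: "x < n" and y: "y < n"
  shows "det (Kmat n (S + outer n w) {x,y}) = (if x = y then w $ x * w $ x else S $$ (x,y) * S $$ (x,y))"
proof -
  let ?N = "S + outer n w"
  have Sc: "S \<in> carrier_mat n n" using S unfolding skew_symmetric_mat_def by blast
  have Nc: "?N \<in> carrier_mat n n" using Sc by simp
  have Ni: "\<And>i j. i < n \<Longrightarrow> j < n \<Longrightarrow> ?N $$ (i,j) = S $$ (i,j) + w $ i * w $ j"
    using Sc by (simp add: outer_def)
  have Ssk: "\<And>i j. i < n \<Longrightarrow> j < n \<Longrightarrow> S $$ (i,j) = - S $$ (j,i)" and Sd: "\<And>i. i < n \<Longrightarrow> S $$ (i,i) = 0"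
    using S unfolding skew_symmetric_mat_def by blast+
  have gen: "det (Kmat n ?N {a,b}) = S $$ (a,b) * S $$ (a,b)" if ab: "a < b" "b < n" for a b
  proof -
    have a: "a < n" using ab by simp
    have "det (Kmat n ?N {a,b}) = ?N $$ (a,a) * ?N $$ (b,b) - ?N $$ (a,b) * ?N $$ (b,a)"
      by (rule det_K2[OF Nc ab])
    also have "\<dots> = S $$ (a,b) * S $$ (a,b)"
      unfolding Ni[OF a a] Ni[OF ab(2) ab(2)] Ni[OF a ab(2)] Ni[OF ab(2) a] Sd[OF a] Sd[OF ab(2)] Ssk[OF ab(2) a]
      by (simp add: algebra_simps)
    finally show ?thesis .
  qed
  show ?thesis
  proof (cases "x = y")
    case True
    then show ?thesis using det_K1[OF Nc x] Ni[OF x x] Sd[OF x] by simp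
  next
    case False
    show ?thesis
    proof (cases "x < y")
      case True then show ?thesis using gen[OF True y] False by simp
    next
      case F2: False
      then have "y < x" using False by simp
      then have "det (Kmat n ?N {y,x}) = S $$ (y,x) * S $$ (y,x)" using gen x by simp
      moreover have "{y,x} = {x,y}" by auto
      ultimately show ?thesis using False Ssk[OF x y] by simp
    qed
  qed
qed

lemma Kmat_empty: "Kmat n M {} = 1\<^sub>m n"
  by (rule eq_matI, auto simp: Kmat_def)

lemma symdiff_self: "Y \<triangle> Y = {}" unfolding symdiff_def by auto
lemma symdiff_comm: "A \<triangle> B = B \<triangle> A" unfolding symdiff_def by auto

lemma base:
  fixes S N :: "'a::field mat"
  assumes S: "skew_symmetric_mat n S" and w: "w \<in> carrier_vec n" and Nd: "N = S + outer n w"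
    and Y: "Y \<subseteq> {0..<n}" and dY: "det (Kmat n N Y) \<noteq> 0" and x: "x \<in> Y"
  shows "\<exists>y\<in>Y. det (Kmat n N {x,y}) \<noteq> 0 \<and> det (Kmat n N (Y \<triangle> {x,y})) \<noteq> 0"
proof -
  let ?K = "Kmat n N Y" let ?L = "Lmat n N Y" let ?G = "Gi ?K"
  define N' where "N' = ?G * ?L"
  define w' where "w' = ?G *\<^sub>v w"
  define S' where "S' = N' - outer n w'"
  have Sc: "S \<in> carrier_mat n n" using S unfolding skew_symmetric_mat_def by blast
  have Nc: "N \<in> carrier_mat n n" using Sc Nd by simp
  have G: "?G \<in> carrier_mat n n" "?K * ?G = 1\<^sub>m n" "?G * ?K = 1\<^sub>m n" using Gi[OF Kmat_carrier dY] by auto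
  have N'c: "N' \<in> carrier_mat n n" unfolding N'_def using G by simp
  have w'c: "w' \<in> carrier_vec n" unfolding w'_def using G w by simp
  have S': "skew_symmetric_mat n S'" unfolding S'_def N'_def w'_def
    by (rule classC[OF S w Nd dY refl])
  have S'c: "S' \<in> carrier_mat n n" using S' unfolding skew_symmetric_mat_def by blast
  have N'd: "N' = S' + outer n w'" unfolding S'_def by (rule eq_matI, use N'c in \<open>auto simp: outer_def\<close>)
  have xn: "x < n" using x Y by auto
  have Ni: "\<And>i j. i < n \<Longrightarrow> j < n \<Longrightarrow> N $$ (i,j) = S $$ (i,j) + w $ i * w $ j"
    using Sc Nd by (simp add: outer_def)
  have N'i: "\<And>i j. i < n \<Longrightarrow> j < n \<Longrightarrow> N' $$ (i,j) = S' $$ (i,j) + w' $ i * w' $ j"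
    using S'c N'd by (simp add: outer_def)
  have Ssk: "\<And>i j. i < n \<Longrightarrow> j < n \<Longrightarrow> S $$ (i,j) = - S $$ (j,i)" and Sd: "\<And>i. i < n \<Longrightarrow> S $$ (i,i) = 0"
    using S unfolding skew_symmetric_mat_def by blast+
  have S'sk: "\<And>i j. i < n \<Longrightarrow> j < n \<Longrightarrow> S' $$ (i,j) = - S' $$ (j,i)"
    using S' unfolding skew_symmetric_mat_def by blast
  have tw: "det (Kmat n N (Z \<triangle> Y)) = det ?K * det (Kmat n N' Z)" for Z
    by (rule twist_det[OF Nc dY], simp add: N'_def)
  have KK': "?K * Kmat n N' Y = 1\<^sub>m n"
    using twist[OF Nc dY, of N' Y] by (simp add: N'_def symdiff_self Kmat_empty)
  have K'G: "Kmat n N' Y = ?G"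
  proof -
    have "?G * (?K * Kmat n N' Y) = (?G * ?K) * Kmat n N' Y"
      by (rule assoc_mult_mat[symmetric, of _ n n _ n _ n], use G in auto)
    then show ?thesis unfolding KK' G(3) using G by simp
  qed
  have Kx: "\<And>k. k < n \<Longrightarrow> ?K $$ (x,k) = (if k \<in> Y then N $$ (x,k) else 0)"
    using xn x by (auto simp: Kmat_index)
  have K'x: "\<And>k. k < n \<Longrightarrow> Kmat n N' Y $$ (x,k) = (if k \<in> Y then N' $$ (x,k) else 0)"
    using xn x by (auto simp: Kmat_index)
  have E1: "(\<Sum>k<n. (if k \<in> Y then N $$ (x,k) * N' $$ (k,x) else 0)) = 1"
  proof -
    have "?K * N' = ?L" unfolding N'_def
      by (subst assoc_mult_mat[symmetric, of _ n n _ n _ n], use G in \<open>auto simp: left_mult_one_mat[OF Lmat_carrier]\<close>)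
    then have "(?K * N') $$ (x,x) = 1" using xn x by (simp add: Lmat_index)
    moreover have "(?K * N') $$ (x,x) = (\<Sum>k<n. ?K $$ (x,k) * N' $$ (k,x))"
      using xn N'c by (simp add: scalar_prod_def lessThan_atLeast0)
    moreover have "(\<Sum>k<n. ?K $$ (x,k) * N' $$ (k,x)) = (\<Sum>k<n. (if k \<in> Y then N $$ (x,k) * N' $$ (k,x) else 0))"
      by (intro sum.cong refl, simp add: Kx)
    ultimately show ?thesis by simp
  qed
  have E2: "(\<Sum>k<n. (if k \<in> Y then N $$ (x,k) * w' $ k else 0)) = w $ x"
  proof -
    have "?K *\<^sub>v w' = w" unfolding w'_def
      by (subst assoc_mult_mat_vec[symmetric, of _ n n _ n], use G w in auto)
    then have "(?K *\<^sub>v w') $ x = w $ x" by simp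
    moreover have "(?K *\<^sub>v w') $ x = (\<Sum>k<n. ?K $$ (x,k) * w' $ k)"
      using xn w'c by (simp add: mult_mat_vec_def scalar_prod_def lessThan_atLeast0)
    moreover have "(\<Sum>k<n. ?K $$ (x,k) * w' $ k) = (\<Sum>k<n. (if k \<in> Y then N $$ (x,k) * w' $ k else 0))"
      by (intro sum.cong refl, simp add: Kx)
    ultimately show ?thesis by simp
  qed
  have E3: "(\<Sum>k<n. (if k \<in> Y then N' $$ (x,k) * w $ k else 0)) = w' $ x"
  proof -
    have "(Kmat n N' Y *\<^sub>v w) $ x = w' $ x" unfolding K'G w'_def ..
    moreover have "(Kmat n N' Y *\<^sub>v w) $ x = (\<Sum>k<n. Kmat n N' Y $$ (x,k) * w $ k)"
      using xn w by (simp add: mult_mat_vec_def scalar_prod_def lessThan_atLeast0)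
    moreover have "(\<Sum>k<n. Kmat n N' Y $$ (x,k) * w $ k) = (\<Sum>k<n. (if k \<in> Y then N' $$ (x,k) * w $ k else 0))"
      by (intro sum.cong refl, simp add: K'x)
    ultimately show ?thesis by simp
  qed
  show ?thesis
  proof (rule ccontr)
    assume neg: "\<not> ?thesis"
    have H: "\<not> (det (Kmat n N {x,y}) \<noteq> 0 \<and> det (Kmat n N' {x,y}) \<noteq> 0)" if y: "y \<in> Y" for y
    proof
      assume "det (Kmat n N {x,y}) \<noteq> 0 \<and> det (Kmat n N' {x,y}) \<noteq> 0"
      moreover have "{x,y} \<triangle> Y = Y \<triangle> {x,y}" by (rule symdiff_comm)
      ultimately show False using neg y tw[of "{x,y}"] dY by auto
    qed
    have yn: "\<And>y. y \<in> Y \<Longrightarrow> y < n" using Y by auto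
    have H1: "w $ x = 0 \<or> w' $ x = 0"
      using H[OF x] pair_det[OF S w xn xn] pair_det[OF S' w'c xn xn] Nd N'd by auto
    have H2: "S $$ (x,k) = 0 \<or> S' $$ (x,k) = 0" if k: "k \<in> Y" "k \<noteq> x" for k
      using H[OF k(1)] pair_det[OF S w xn yn[OF k(1)]] pair_det[OF S' w'c xn yn[OF k(1)]] Nd N'd k(2) by auto
    have SS: "S $$ (x,k) * S' $$ (k,x) = 0" if k: "k \<in> Y" for k
    proof (cases "k = x")
      case True then show ?thesis using Sd[OF xn] by simp
    next
      case False
      then show ?thesis using H2[OF k False] S'sk[OF yn[OF k] xn] by auto
    qed
    show False
    proof (cases "w' $ x = 0")
      case True
      have pt: "(if k \<in> Y then N $$ (x,k) * N' $$ (k,x) else 0) = - w $ x * (if k \<in> Y then N' $$ (x,k) * w $ k else 0)"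
        if k: "k < n" for k
      proof (cases "k \<in> Y")
        case True
        have "N $$ (x,k) * N' $$ (k,x) = S $$ (x,k) * S' $$ (k,x) + w $ x * w $ k * S' $$ (k,x)"
          unfolding Ni[OF xn k] N'i[OF k xn] using \<open>w' $ x = 0\<close> by (simp add: algebra_simps)
        also have "\<dots> = w $ x * w $ k * S' $$ (k,x)" using SS[OF True] by simp
        also have "\<dots> = - w $ x * (N' $$ (x,k) * w $ k)"
          unfolding N'i[OF xn k] S'sk[OF k xn] using \<open>w' $ x = 0\<close> by (simp add: algebra_simps)
        finally show ?thesis using True by simp
      qed simp
      have "1 = (\<Sum>k<n. - w $ x * (if k \<in> Y then N' $$ (x,k) * w $ k else 0))"
        using E1 pt by simp
      also have "\<dots> = - w $ x * w' $ x" unfolding sum_distrib_left[symmetric] E3 ..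
      finally show False using True by simp
    next
      case False
      then have w0: "w $ x = 0" using H1 by simp
      have pt: "(if k \<in> Y then N $$ (x,k) * N' $$ (k,x) else 0) = w' $ x * (if k \<in> Y then N $$ (x,k) * w' $ k else 0)"
        if k: "k < n" for k
      proof (cases "k \<in> Y")
        case True
        have "N $$ (x,k) * N' $$ (k,x) = S $$ (x,k) * S' $$ (k,x) + S $$ (x,k) * w' $ k * w' $ x"
          unfolding Ni[OF xn k] N'i[OF k xn] using w0 by (simp add: algebra_simps)
        also have "\<dots> = S $$ (x,k) * w' $ k * w' $ x" using SS[OF True] by simp
        also have "\<dots> = w' $ x * (N $$ (x,k) * w' $ k)"
          unfolding Ni[OF xn k] using w0 by (simp add: algebra_simps)
        finally show ?thesis using True by simp
      qed simp
      have "1 = (\<Sum>k<n. w' $ x * (if k \<in> Y then N $$ (x,k) * w' $ k else 0))"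
        using E1 pt by simp
      also have "\<dots> = w' $ x * w $ x" unfolding sum_distrib_left[symmetric] E2 ..
      finally show False using w0 by simp
    qed
  qed
qed

theorem proposition2p28:
  fixes A :: "'a::field mat" and v :: "'a vec" and n :: nat
  assumes "skew_symmetric_mat n A"
    and "v \<in> carrier_vec n"
  shows "strong_delta_matroid {0..<n}
           {I. I \<subseteq> {0..<n} \<and> nonsingular (principal_submatrix (A + outer_self v) I)}"
proof -
  let ?M = "A + outer_self v"
  let ?B = "{I. I \<subseteq> {0..<n} \<and> nonsingular (principal_submatrix ?M I)}"
  have Ac: "A \<in> carrier_mat n n" using assms(1) unfolding skew_symmetric_mat_def by blast
  have Mo: "?M = A + outer n v" using assms(2) unfolding outer_self_def outer_def by simp
  have Mc: "?M \<in> carrier_mat n n" using Ac Mo by simp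
  have memB: "I \<in> ?B \<longleftrightarrow> I \<subseteq> {0..<n} \<and> det (Kmat n ?M I) \<noteq> 0" for I
    unfolding nonsingular_def principal_submatrix_def using det_Kmat[OF Mc] by auto
  have strong: "\<forall>B\<in>?B. \<forall>B'\<in>?B. \<forall>x\<in>B \<triangle> B'. \<exists>y\<in>B \<triangle> B'. B \<triangle> {x,y} \<in> ?B \<and> B' \<triangle> {x,y} \<in> ?B"
  proof (intro ballI)
    fix B B' x assume B: "B \<in> ?B" and B': "B' \<in> ?B" and x: "x \<in> B \<triangle> B'"
    have Bs: "B \<subseteq> {0..<n}" and dB: "det (Kmat n ?M B) \<noteq> 0" using B memB by auto
    have B's: "B' \<subseteq> {0..<n}" and dB': "det (Kmat n ?M B') \<noteq> 0" using B' memB by auto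
    define N where "N = Gi (Kmat n ?M B) * Lmat n ?M B"
    define w' where "w' = Gi (Kmat n ?M B) *\<^sub>v v"
    define S' where "S' = N - outer n w'"
    have G: "Gi (Kmat n ?M B) \<in> carrier_mat n n" using Gi[OF Kmat_carrier dB] by auto
    have Nc: "N \<in> carrier_mat n n" unfolding N_def using G by simp
    have w'c: "w' \<in> carrier_vec n" unfolding w'_def using G assms(2) by simp
    have S': "skew_symmetric_mat n S'" unfolding S'_def N_def w'_def
      by (rule classC[OF assms(1) assms(2) Mo dB refl])
    have Nd: "N = S' + outer n w'" unfolding S'_def by (rule eq_matI, use Nc in \<open>auto simp: outer_def\<close>)
    have tw: "det (Kmat n ?M (Z \<triangle> B)) = det (Kmat n ?M B) * det (Kmat n N Z)" for Z
      by (rule twist_det[OF Mc dB N_def])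
    let ?Y = "B \<triangle> B'"
    have Ys: "?Y \<subseteq> {0..<n}" using Bs B's unfolding symdiff_def by auto
    have "?Y \<triangle> B = B'" unfolding symdiff_def by auto
    then have dY: "det (Kmat n N ?Y) \<noteq> 0" using tw[of ?Y] dB' by auto
    obtain y where y: "y \<in> ?Y" and d1: "det (Kmat n N {x,y}) \<noteq> 0" and d2: "det (Kmat n N (?Y \<triangle> {x,y})) \<noteq> 0"
      using base[OF S' w'c Nd Ys dY x] by blast
    have e1: "{x,y} \<triangle> B = B \<triangle> {x,y}" unfolding symdiff_def by auto
    have e2: "(?Y \<triangle> {x,y}) \<triangle> B = B' \<triangle> {x,y}" unfolding symdiff_def by auto
    have "B \<triangle> {x,y} \<subseteq> {0..<n}" using Bs x y Ys unfolding symdiff_def by auto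
    moreover have "B' \<triangle> {x,y} \<subseteq> {0..<n}" using B's x y Ys unfolding symdiff_def by auto
    moreover have "det (Kmat n ?M (B \<triangle> {x,y})) \<noteq> 0" using tw[of "{x,y}"] dB d1 e1 by simp
    moreover have "det (Kmat n ?M (B' \<triangle> {x,y})) \<noteq> 0" using tw[of "?Y \<triangle> {x,y}"] dB d2 e2 by simp
    ultimately show "\<exists>y\<in>?Y. B \<triangle> {x,y} \<in> ?B \<and> B' \<triangle> {x,y} \<in> ?B" using y memB by blast
  qed
  have empty: "{} \<in> ?B" using memB[of "{}"] by (simp add: Kmat_empty)
  show ?thesis
    unfolding strong_delta_matroid_def delta_matroid_def
  proof (intro conjI)
    show "finite {0..<n}" by simp
    show "?B \<noteq> {}" using empty by blast
    show "\<forall>B\<in>?B. B \<subseteq> {0..<n}" by blast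
    show "\<forall>B\<in>?B. \<forall>B'\<in>?B. \<forall>x\<in>B \<triangle> B'. \<exists>y\<in>B \<triangle> B'. B \<triangle> {x, y} \<in> ?B"
      using strong by meson
  qed (rule strong)
qed

end
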